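(* Let $(Q,T)$ be the outcome of any equilibrium (under a bailout at price $p_g$) of the two-period model. Then the welfare of this equilibrium equals $$\int_0^1\Big\{2\theta+S\,Q(\theta)-\lambda\Big[\Big(\frac{F(\theta)}{f(\theta)}-S\Big)Q(\theta)+\bar u-2\Big]\Big\}f(\theta)\,d\theta,$$ where $\bar u\ge 2$ is the equilibrium total payoff of the highest type $\theta=1$.
   Context: Two-period model: a continuum of firms with privately known type $\theta\in[0,1]$, cdf $F$, density $f>0$, $f$ strictly log-concave. A type-$\theta$ firm holds one unit of an asset worth $\theta$ in each of two periods $t=1,2$. In each period it has a project with cost $I>0$ and net return $S>0$ that can be funded only by selling that period's unit; selling that unit at price $p\ge I$ yields $p+S$ for that period, not selling yields $\theta$. A firm's total payoff is the (undiscounted) sum of the two periods' payoffs. In each period competitive risk-neutral buyers make price offers and break even in expectation. At $t=1$ only, the government offers to buy one unit at price $p_g$. Equilibrium means perfect Bayesian equilibrium. Outcome: an equilibrium induces $(Q,T):[0,1]\to\{0,1,2\}\times\mathbb{R}$, where $Q(\theta)$ is the total number of units a type-$\theta$ firm sells over the two periods and $T(\theta)$ is the total payment it receives (from the government and from market buyers). The type-$\theta$ payoff is $u(\theta)=T(\theta)+\theta(2-Q(\theta))+SQ(\theta)$; it is incentive compatible in the sense that $u(\theta)\ge T(\tilde\theta)+\theta(2-Q(\tilde\theta))+SQ(\tilde\theta)$ for all $\tilde\theta,\theta$, and $u(\theta)\ge 2\theta$. Welfare: raising one dollar of public funds costs $1+\lambda$, $\lambda\ge0$. With $\Theta_g$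 the set of types accepting the government offer, welfare is $\int_0^1[u(\theta)+\theta Q(\theta)-T(\theta)]f(\theta)d\theta-\lambda\int_{\Theta_g}(p_g-\theta)f(\theta)d\theta$. *)

theory Defs
  imports "HOL-Analysis.Analysis"
begin

definition strictly_log_concave_on :: "real set \<Rightarrow> (real \<Rightarrow> real) \<Rightarrow> bool" where
  "strictly_log_concave_on A f \<longleftrightarrow>
     (\<forall>x\<in>A. \<forall>y\<in>A. x \<noteq> y \<longrightarrow> (\<forall>t::real. 0 < t \<and> t < 1 \<longrightarrow>
        t * ln (f x) + (1 - t) * ln (f y) < ln (f (t * x + (1 - t) * y))))"

definition type_distribution :: "(real \<Rightarrow> real) \<Rightarrow> (real \<Rightarrow> real) \<Rightarrow> bool" where
  "type_distribution F f \<longleftrightarrow>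
     set_integrable lborel {0..1} f \<and>
     (\<forall>\<theta>\<in>{0..1}. f \<theta> > 0) \<and>
     (\<forall>\<theta>\<in>{0..1}. F \<theta> = set_lebesgue_integral lborel {0..\<theta>} f) \<and>
     F 1 = 1 \<and>
     strictly_log_concave_on {0..1} f"

datatype act1 = NoSale | SellGov | SellMkt

definition price1 :: "real \<Rightarrow> real \<Rightarrow> act1 \<Rightarrow> real" where
  "price1 pg p1 a = (case a of NoSale \<Rightarrow> 0 | SellGov \<Rightarrow> pg | SellMkt \<Rightarrow> p1)"

definition pay1 :: "real \<Rightarrow> real \<Rightarrow> real \<Rightarrow> real \<Rightarrow> act1 \<Rightarrow> real" where
  "pay1 S pg p1 \<theta> a = (if a = NoSale then \<theta> else price1 pg p1 a + S)"

definition pay2 :: "real \<Rightarrow> (act1 \<Rightarrow> real) \<Rightarrow> real \<Rightarrow> act1 \<Rightarrow> bool \<Rightarrow> real" where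
  "pay2 S p2 \<theta> h b = (if b then p2 h + S else \<theta>)"

text \<open>A sale can fund the project only at a price of at least I; such sales are the
only feasible ones.\<close>
definition feasible1 :: "real \<Rightarrow> real \<Rightarrow> real \<Rightarrow> act1 \<Rightarrow> bool" where
  "feasible1 I pg p1 a \<longleftrightarrow> (a = SellGov \<longrightarrow> pg \<ge> I) \<and> (a = SellMkt \<longrightarrow> p1 \<ge> I)"

definition feasible2 :: "real \<Rightarrow> (act1 \<Rightarrow> real) \<Rightarrow> act1 \<Rightarrow> bool \<Rightarrow> bool" where
  "feasible2 I p2 h b \<longleftrightarrow> (b \<longrightarrow> p2 h \<ge> I)"

text \<open>Equilibrium (perfect Bayesian, pure firm strategies):
  p1 = period-1 market price, p2 h = period-2 market price after public period-1 history h,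
  a1 theta = period-1 action of type theta, s2 theta h = period-2 sale decision after h.
  Firms are sequentially rational; competitive buyers break even in expectation
  in each period and after each history (Bayes' rule on the types trading there).\<close>
definition equilibrium ::
  "real \<Rightarrow> real \<Rightarrow> real \<Rightarrow> (real \<Rightarrow> real) \<Rightarrow>
   real \<Rightarrow> (act1 \<Rightarrow> real) \<Rightarrow> (real \<Rightarrow> act1) \<Rightarrow> (real \<Rightarrow> act1 \<Rightarrow> bool) \<Rightarrow> bool" where
  "equilibrium I S pg f p1 p2 a1 s2 \<longleftrightarrow>
     \<comment> \<open>measurable strategies\<close>
     (\<forall>h. {\<theta>. a1 \<theta> = h} \<in> sets borel \<and> {\<theta>. s2 \<theta> h} \<in> sets borel) \<and>
     \<comment> \<open>feasibility\<close>
     (\<forall>\<theta>\<in>{0..1}. feasible1 I pg p1 (a1 \<theta>) \<and> (\<forall>h. feasible2 I p2 h (s2 \<theta> h))) \<and>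
     \<comment> \<open>sequential rationality in period 2, after every history\<close>
     (\<forall>\<theta>\<in>{0..1}. \<forall>h b. feasible2 I p2 h b \<longrightarrow>
        pay2 S p2 \<theta> h b \<le> pay2 S p2 \<theta> h (s2 \<theta> h)) \<and>
     \<comment> \<open>optimality in period 1 given continuation play\<close>
     (\<forall>\<theta>\<in>{0..1}. \<forall>a. feasible1 I pg p1 a \<longrightarrow>
        pay1 S pg p1 \<theta> a + pay2 S p2 \<theta> a (s2 \<theta> a)
          \<le> pay1 S pg p1 \<theta> (a1 \<theta>) + pay2 S p2 \<theta> (a1 \<theta>) (s2 \<theta> (a1 \<theta>))) \<and>
     \<comment> \<open>period-1 market buyers break even in expectation\<close>
     set_lebesgue_integral lborel {\<theta>\<in>{0..1}. a1 \<theta> = SellMkt} (\<lambda>\<theta>. (\<theta> - p1) * f \<theta>) = 0 \<and>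
     \<comment> \<open>period-2 market buyers break even in expectation after every history\<close>
     (\<forall>h. set_lebesgue_integral lborel {\<theta>\<in>{0..1}. a1 \<theta> = h \<and> s2 \<theta> h}
            (\<lambda>\<theta>. (\<theta> - p2 h) * f \<theta>) = 0)"

definition outcome_Q :: "(real \<Rightarrow> act1) \<Rightarrow> (real \<Rightarrow> act1 \<Rightarrow> bool) \<Rightarrow> real \<Rightarrow> nat" where
  "outcome_Q a1 s2 \<theta> = (if a1 \<theta> = NoSale then 0 else 1) + (if s2 \<theta> (a1 \<theta>) then 1 else 0)"

definition outcome_T ::
  "real \<Rightarrow> real \<Rightarrow> (act1 \<Rightarrow> real) \<Rightarrow> (real \<Rightarrow> act1) \<Rightarrow> (real \<Rightarrow> act1 \<Rightarrow> bool) \<Rightarrow> real \<Rightarrow> real" where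
  "outcome_T pg p1 p2 a1 s2 \<theta> =
     price1 pg p1 (a1 \<theta>) + (if s2 \<theta> (a1 \<theta>) then p2 (a1 \<theta>) else 0)"

definition gov_set :: "(real \<Rightarrow> act1) \<Rightarrow> real set" where
  "gov_set a1 = {\<theta>\<in>{0..1}. a1 \<theta> = SellGov}"

definition payoff :: "real \<Rightarrow> (real \<Rightarrow> nat) \<Rightarrow> (real \<Rightarrow> real) \<Rightarrow> real \<Rightarrow> real" where
  "payoff S Q T \<theta> = T \<theta> + \<theta> * (2 - real (Q \<theta>)) + S * real (Q \<theta>)"

definition welfare ::
  "real \<Rightarrow> real \<Rightarrow> real \<Rightarrow> (real \<Rightarrow> real) \<Rightarrow> (real \<Rightarrow> nat) \<Rightarrow> (real \<Rightarrow> real) \<Rightarrow> real set \<Rightarrow> real" where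
  "welfare lam S pg f Q T \<Theta>g =
     set_lebesgue_integral lborel {0..1}
       (\<lambda>\<theta>. (payoff S Q T \<theta> + \<theta> * real (Q \<theta>) - T \<theta>) * f \<theta>)
     - lam * set_lebesgue_integral lborel \<Theta>g (\<lambda>\<theta>. (pg - \<theta>) * f \<theta>)"

end

theory Submission
  imports Defs
begin


lemma int_bdd:
  fixes g h :: "real \<Rightarrow> real"
  assumes h: "integrable lborel h" and g: "g \<in> borel_measurable borel"
    and b: "\<And>x. h x \<noteq> 0 \<Longrightarrow> \<bar>g x\<bar> \<le> B"
  shows "integrable lborel (\<lambda>x. g x * h x)"
proof (rule Bochner_Integration.integrable_bound[where f="\<lambda>x. B * h x"])
  show "integrable lborel (\<lambda>x. B * h x)" using h by simp
  have [measurable]: "h \<in> borel_measurable borel" using borel_measurable_integrable[OF h] by simp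
  show "(\<lambda>x. g x * h x) \<in> borel_measurable lborel" using g by simp
  show "AE x in lborel. norm (g x * h x) \<le> norm (B * h x)"
  proof (rule AE_I2)
    fix x show "norm (g x * h x) \<le> norm (B * h x)"
    proof (cases "h x = 0")
      case False
      then have "\<bar>g x\<bar> \<le> \<bar>B\<bar>" using b[of x] by linarith
      then show ?thesis by (simp add: abs_mult mult_right_mono)
    qed simp
  qed
qed

lemma envelope:
  fixes u k :: "real \<Rightarrow> real"
  assumes sw: "\<And>x y. x\<in>{0..1} \<Longrightarrow> y\<in>{0..1} \<Longrightarrow> u x + k x * (y - x) \<le> u y"
    and kv: "\<And>x. k x \<in> {0,1,2}"
    and km: "k \<in> borel_measurable borel"
    and t: "t \<in> {0..1}"
  shows "u 1 - u t = (\<integral>s. indicator {t..1} s * k s \<partial>lborel)"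
proof -
  have mono: "k x \<le> k y" if "x\<in>{0..1}" "y\<in>{0..1}" "x \<le> y" for x y
  proof (rule ccontr)
    assume "\<not> k x \<le> k y"
    with that have "x < y" by (cases "x = y") auto
    have "(k x - k y) * (y - x) > 0" using \<open>x<y\<close> \<open>\<not> k x \<le> k y\<close> by simp
    moreover have "u x + k x * (y - x) \<le> u y" "u y + k y * (x - y) \<le> u x"
      using sw that by auto
    ultimately show False by (simp add: algebra_simps)
  qed
  have lip: "\<bar>u y - u x\<bar> \<le> 2 * \<bar>y - x\<bar>" if "x\<in>{0..1}" "y\<in>{0..1}" for x y
  proof -
    have 1: "k x * (y - x) \<le> u y - u x" "u y - u x \<le> k y * (y - x)"
      using sw[OF that] sw[OF that(2,1)] by (auto simp: algebra_simps)
    have kb: "0 \<le> k z" "k z \<le> 2" for z using kv[of z] by auto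
    show ?thesis
    proof (cases "x \<le> y")
      case True
      have "0 \<le> k x * (y - x)" using kb True by simp
      moreover have "k y * (y - x) \<le> 2 * (y - x)" using kb True by (intro mult_right_mono) auto
      ultimately show ?thesis using 1 True by auto
    next
      case False
      have "k x * (y - x) \<ge> 2 * (y - x)" using kb False by (intro mult_right_mono_neg) auto
      moreover have "k y * (y - x) \<le> 0" using kb False by (simp add: mult_nonneg_nonpos)
      ultimately show ?thesis using 1 False by auto
    qed
  qed
  have cont: "continuous_on {0..1} u"
  proof (rule lipschitz_on_continuous_on)
    show "2-lipschitz_on {0..1} u"
      by (rule lipschitz_onI) (auto simp: dist_real_def intro: lip)
  qed
  have loc: "\<exists>e>0. \<forall>y\<in>{0..1}. \<bar>y - x\<bar> < e \<longrightarrow> (c \<le> k y \<longleftrightarrow> c \<le> k x)"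
    if x: "x \<in> {0..1}" and ne: "x \<noteq> Inf {z\<in>{0..1}. c \<le> k z}" for x c
  proof (cases "{z\<in>{0..1}. c \<le> k z} = {}")
    case True
    then show ?thesis using x by (intro exI[of _ 1]) auto
  next
    case False
    define A where "A = {z\<in>{0..1}. c \<le> k z}"
    have bdd: "bdd_below A" unfolding A_def by (rule bdd_belowI[of _ 0]) auto
    show ?thesis
    proof (cases "x < Inf A")
      case True
      have "y \<notin> A" if "y < Inf A" for y using cInf_lower[OF _ bdd, of y] that by auto
      then show ?thesis using True x
        by (intro exI[of _ "Inf A - x"]) (auto simp: A_def)
    next
      case False
      then have "Inf A < x" using ne A_def by auto
      have "A \<noteq> {}" using \<open>{z\<in>{0..1}. c \<le> k z} \<noteq> {}\<close> by (simp add: A_def)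
      then obtain a where a: "a \<in> A" "a < x" using cInf_less_iff[of A x] bdd \<open>Inf A < x\<close> by auto
      have inA: "c \<le> k y" if "y \<in> {0..1}" "a \<le> y" for y
        using mono[of a y] a that by (auto simp: A_def)
      show ?thesis using a x inA
        by (intro exI[of _ "x - a"]) auto
    qed
  qed
  define E where "E = {Inf {z\<in>{0..1}. 1 \<le> k z}, Inf {z\<in>{0..1}. 2 \<le> k z}}"
  have deriv: "(u has_vector_derivative k x) (at x)" if x: "x \<in> {0<..<1} - E" for x
  proof -
    obtain e1 where e1: "e1 > 0" "\<forall>y\<in>{0..1}. \<bar>y - x\<bar> < e1 \<longrightarrow> (1 \<le> k y \<longleftrightarrow> 1 \<le> k x)"
      using loc[of x 1] x by (auto simp: E_def)
    obtain e2 where e2: "e2 > 0" "\<forall>y\<in>{0..1}. \<bar>y - x\<bar> < e2 \<longrightarrow> (2 \<le> k y \<longleftrightarrow> 2 \<le> k x)"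
      using loc[of x 2] x by (auto simp: E_def)
    define e where "e = min (min e1 e2) (min x (1 - x))"
    have e: "e > 0" using e1 e2 x by (auto simp: e_def)
    have eq: "u y = u x + k x * (y - x)" if y: "y \<in> ball x e" for y
    proof -
      have y01: "y \<in> {0..1}" "\<bar>y - x\<bar> < e1" "\<bar>y - x\<bar> < e2"
        using y x by (auto simp: e_def dist_real_def)
      have "k y = k x" using e1(2) e2(2) y01 kv[of x] kv[of y] by auto
      then show ?thesis using sw[of x y] sw[of y x] y01 x by (auto simp: algebra_simps)
    qed
    have "((\<lambda>y. u x + k x * (y - x)) has_field_derivative k x) (at x)"
      by (auto intro!: derivative_eq_intros)
    then have "(u has_field_derivative k x) (at x)"
    proof (rule has_field_derivative_transform_within_open[where S="ball x e"])
      show "open (ball x e)" by simp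
      show "x \<in> ball x e" using e by simp
      fix y assume y: "y \<in> ball x e"
      show "u x + k x * (y - x) = u y" using eq[OF y] by linarith
    qed
    then show ?thesis by (simp add: has_real_derivative_iff_has_vector_derivative)
  qed
  have ftc: "(k has_integral (u 1 - u t)) {t..1}"
    by (rule fundamental_theorem_of_calculus_interior_strong[of E])
       (use t deriv cont in \<open>auto simp: E_def intro: continuous_on_subset\<close>)
  have si: "set_integrable lborel {t..1} k"
    unfolding set_integrable_def
  proof -
    have "integrable lborel (\<lambda>x. k x * indicator {t..1} x)"
    proof (rule int_bdd[OF _ km])
      show "integrable lborel (indicator {t..1} :: real \<Rightarrow> real)" using t by (simp add: integrable_indicator_iff emeasure_lborel_Icc)
      fix x show "\<bar>k x\<bar> \<le> 2" using kv[of x] by auto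
    qed
    then show "integrable lborel (\<lambda>x. indicator {t..1} x *\<^sub>R k x)" by (simp add: mult.commute)
  qed
  have "(LINT s:{t..1}|lborel. k s) = integral {t..1} k"
    by (rule set_borel_integral_eq_integral(2)[OF si])
  also have "\<dots> = u 1 - u t" using ftc by (rule integral_unique)
  finally show ?thesis by (simp add: set_lebesgue_integral_def)
qed



lemma fub:
  fixes f0 k :: "real \<Rightarrow> real"
  assumes f0: "integrable lborel f0" and z: "\<And>x. x \<notin> {0..1} \<Longrightarrow> f0 x = 0"
   and km: "k \<in> borel_measurable borel" and kb: "\<And>s. \<bar>k s\<bar> \<le> B"
  shows "(\<integral>\<theta>. f0 \<theta> * (\<integral>s. indicator {\<theta>..1} s * k s \<partial>lborel) \<partial>lborel)
       = (\<integral>s. k s * (\<integral>\<theta>. indicator {\<theta>..1} s * f0 \<theta> \<partial>lborel) \<partial>lborel)"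
proof -
  have P: "pair_sigma_finite lborel lborel" ..
  have f0m[measurable]: "f0 \<in> borel_measurable borel" using borel_measurable_integrable[OF f0] by simp
  note km[measurable]
  define H where "H = (\<lambda>\<theta> s::real. f0 \<theta> * (indicator {\<theta>..1} s * k s))"
  have ind: "indicator {\<theta>..1} s = (if \<theta> \<le> s \<and> s \<le> 1 then 1 else (0::real))" for \<theta> s
    by (auto simp: indicator_def)
  have Hm[measurable]: "case_prod H \<in> borel_measurable (lborel \<Otimes>\<^sub>M lborel)"
    unfolding H_def ind by measurable
  define G where "G = (\<lambda>(\<theta>::real, s::real). \<bar>f0 \<theta>\<bar> * (\<bar>B\<bar> * indicator {0..1} s))"
  have Gm[measurable]: "G \<in> borel_measurable (lborel \<Otimes>\<^sub>M lborel)"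
    unfolding G_def by measurable
  have i01: "integrable lborel (\<lambda>s. indicator {0..1::real} s :: real)"
    by (simp add: integrable_indicator_iff emeasure_lborel_Icc)
  have Gi: "integrable (lborel \<Otimes>\<^sub>M lborel) G"
  proof (rule pair_sigma_finite.Fubini_integrable[OF P Gm])
    have "(\<lambda>\<theta>. \<integral>s. norm (G (\<theta>, s)) \<partial>lborel) = (\<lambda>\<theta>. \<bar>f0 \<theta>\<bar> * \<bar>B\<bar>)"
      by (rule ext) (simp add: G_def abs_mult)
    then show "integrable lborel (\<lambda>\<theta>. \<integral>s. norm (G (\<theta>, s)) \<partial>lborel)"
      using f0 by simp
    show "AE \<theta> in lborel. integrable lborel (\<lambda>s. G (\<theta>, s))"
      using i01 by (simp add: G_def)
  qed
  have Hi: "integrable (lborel \<Otimes>\<^sub>M lborel) (case_prod H)"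
  proof (rule Bochner_Integration.integrable_bound[OF Gi])
    show "case_prod H \<in> borel_measurable (lborel \<Otimes>\<^sub>M lborel)" by (rule Hm)
    show "AE x in lborel \<Otimes>\<^sub>M lborel. norm (case_prod H x) \<le> norm (G x)"
    proof (rule AE_I2, clarify)
      fix \<theta> s :: real
      show "norm (H \<theta> s) \<le> norm (G (\<theta>, s))"
      proof (cases "f0 \<theta> = 0 \<or> \<not> (\<theta> \<le> s \<and> s \<le> 1)")
        case True then show ?thesis by (auto simp: H_def G_def)
      next
        case False
        then have "\<theta> \<in> {0..1}" "s \<in> {0..1}" using z by force+
        then show ?thesis using False kb[of s]
          by (auto simp: H_def G_def abs_mult intro!: mult_left_mono)
      qed
    qed
  qed
  have "(\<integral>s. (\<integral>\<theta>. H \<theta> s \<partial>lborel) \<partial>lborel) = (\<integral>\<theta>. (\<integral>s. H \<theta> s \<partial>lborel) \<partial>lborel)"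
    by (rule pair_sigma_finite.Fubini_integral[OF P Hi])
  moreover have "(\<integral>\<theta>. H \<theta> s \<partial>lborel) = k s * (\<integral>\<theta>. indicator {\<theta>..1} s * f0 \<theta> \<partial>lborel)" for s
  proof -
    have "(\<integral>\<theta>. H \<theta> s \<partial>lborel) = (\<integral>\<theta>. k s * (indicator {\<theta>..1} s * f0 \<theta>) \<partial>lborel)"
      by (rule Bochner_Integration.integral_cong) (auto simp: H_def)
    then show ?thesis by simp
  qed
  moreover have "(\<integral>s. H \<theta> s \<partial>lborel) = f0 \<theta> * (\<integral>s. indicator {\<theta>..1} s * k s \<partial>lborel)" for \<theta>
    by (simp add: H_def)
  ultimately show ?thesis by simp
qed



definition Uf :: "real \<Rightarrow> real \<Rightarrow> real \<Rightarrow> (act1 \<Rightarrow> real) \<Rightarrow> (real \<Rightarrow> act1) \<Rightarrow> (real \<Rightarrow> act1 \<Rightarrow> bool) \<Rightarrow> real \<Rightarrow> real" where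
  "Uf S pg p1 p2 a1 s2 \<theta> = pay1 S pg p1 \<theta> (a1 \<theta>) + pay2 S p2 \<theta> (a1 \<theta>) (s2 \<theta> (a1 \<theta>))"

definition Kf :: "(real \<Rightarrow> act1) \<Rightarrow> (real \<Rightarrow> act1 \<Rightarrow> bool) \<Rightarrow> real \<Rightarrow> real" where
  "Kf a1 s2 \<theta> = (if a1 \<theta> = NoSale then 1 else 0) + (if s2 \<theta> (a1 \<theta>) then 0 else 1)"

lemma payoff_eq: "payoff S (outcome_Q a1 s2) (outcome_T pg p1 p2 a1 s2) \<theta> = Uf S pg p1 p2 a1 s2 \<theta>"
  by (cases "a1 \<theta>"; cases "s2 \<theta> (a1 \<theta>)")
     (auto simp: payoff_def outcome_Q_def outcome_T_def Uf_def pay1_def pay2_def price1_def algebra_simps)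

lemma Q_eq: "real (outcome_Q a1 s2 \<theta>) = 2 - Kf a1 s2 \<theta>"
  by (auto simp: outcome_Q_def Kf_def)

lemma Kf_vals: "Kf a1 s2 \<theta> \<in> {0,1,2}"
  by (auto simp: Kf_def)

lemma sandwich:
  assumes eq: "equilibrium I S pg f p1 p2 a1 s2" and x: "x \<in> {0..1}" and y: "y \<in> {0..1}"
  shows "Uf S pg p1 p2 a1 s2 x + Kf a1 s2 x * (y - x) \<le> Uf S pg p1 p2 a1 s2 y"
proof -
  define a where "a = a1 x"
  define b where "b = s2 x a"
  have f1: "feasible1 I pg p1 a" and f2: "feasible2 I p2 a b"
    using eq x unfolding equilibrium_def a_def b_def by auto
  have p2: "pay2 S p2 y a b \<le> pay2 S p2 y a (s2 y a)"
    using eq y f2 unfolding equilibrium_def by blast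
  have p1: "pay1 S pg p1 y a + pay2 S p2 y a (s2 y a) \<le> Uf S pg p1 p2 a1 s2 y"
    using eq y f1 unfolding equilibrium_def Uf_def by blast
  have "pay1 S pg p1 y a + pay2 S p2 y a b = Uf S pg p1 p2 a1 s2 x + Kf a1 s2 x * (y - x)"
    unfolding Uf_def Kf_def a_def[symmetric] b_def[symmetric]
    by (cases "a = NoSale"; cases b) (auto simp: pay1_def pay2_def algebra_simps)
  with p1 p2 show ?thesis by linarith
qed

lemma ubar_ge:
  assumes eq: "equilibrium I S pg f p1 p2 a1 s2"
  shows "Uf S pg p1 p2 a1 s2 1 \<ge> 2"
proof -
  have f1: "feasible1 I pg p1 NoSale" and f2: "feasible2 I p2 NoSale False"
    by (auto simp: feasible1_def feasible2_def)
  have p2: "pay2 S p2 1 NoSale False \<le> pay2 S p2 1 NoSale (s2 1 NoSale)"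
    using eq f2 unfolding equilibrium_def by auto
  have p1: "pay1 S pg p1 1 NoSale + pay2 S p2 1 NoSale (s2 1 NoSale) \<le> Uf S pg p1 p2 a1 s2 1"
    using eq f1 unfolding equilibrium_def Uf_def by auto
  show ?thesis using p1 p2 by (simp add: pay1_def pay2_def)
qed

lemma meas_strat:
  fixes psi :: "act1 \<Rightarrow> bool \<Rightarrow> real \<Rightarrow> real"
  assumes ms1: "\<And>h. {\<theta>. a1 \<theta> = h} \<in> sets borel" and ms2: "\<And>h. {\<theta>. s2 \<theta> h} \<in> sets borel"
    and mp: "\<And>a b. psi a b \<in> borel_measurable borel"
  shows "(\<lambda>\<theta>. psi (a1 \<theta>) (s2 \<theta> (a1 \<theta>)) \<theta>) \<in> borel_measurable borel"
proof -
  have e: "(\<lambda>\<theta>. psi (a1 \<theta>) (s2 \<theta> (a1 \<theta>)) \<theta>) = (\<lambda>\<theta>. \<Sum>a\<in>{NoSale,SellGov,SellMkt}. \<Sum>b\<in>{True,False}.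
      indicator ({\<theta>. a1 \<theta> = a} \<inter> {\<theta>. s2 \<theta> a = b}) \<theta> * psi a b \<theta>)"
  proof (rule ext)
    fix \<theta> show "psi (a1 \<theta>) (s2 \<theta> (a1 \<theta>)) \<theta> = (\<Sum>a\<in>{NoSale,SellGov,SellMkt}. \<Sum>b\<in>{True,False}.
      indicator ({\<theta>. a1 \<theta> = a} \<inter> {\<theta>. s2 \<theta> a = b}) \<theta> * psi a b \<theta>)"
      by (cases "a1 \<theta>"; cases "s2 \<theta> (a1 \<theta>)") (auto simp: indicator_def)
  qed
  have s: "{\<theta>. s2 \<theta> a = b} \<in> sets borel" for a b
  proof (cases b)
    case True then show ?thesis using ms2[of a] by simp
  next
    case False
    have "{\<theta>. s2 \<theta> a = b} = - {\<theta>. s2 \<theta> a}" using False by auto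
    then show ?thesis using borel_comp[OF ms2[of a]] by simp
  qed
  show ?thesis unfolding e
    by (intro borel_measurable_sum borel_measurable_times borel_measurable_indicator mp sets.Int ms1 s)
qed



theorem lemma2:
  fixes F f :: "real \<Rightarrow> real" and I S pg lam p1 :: real
    and p2 :: "act1 \<Rightarrow> real" and a1 :: "real \<Rightarrow> act1" and s2 :: "real \<Rightarrow> act1 \<Rightarrow> bool"
  assumes dist: "type_distribution F f"
    and I_pos: "I > 0" and S_pos: "S > 0" and lam: "lam \<ge> 0"
    and eq: "equilibrium I S pg f p1 p2 a1 s2"
  defines "Q \<equiv> outcome_Q a1 s2"
    and "T \<equiv> outcome_T pg p1 p2 a1 s2"
    and "ubar \<equiv> payoff S (outcome_Q a1 s2) (outcome_T pg p1 p2 a1 s2) 1"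
  shows "ubar \<ge> 2 \<and>
         welfare lam S pg f Q T (gov_set a1) =
           set_lebesgue_integral lborel {0..1}
             (\<lambda>\<theta>. (2 * \<theta> + S * real (Q \<theta>)
                    - lam * ((F \<theta> / f \<theta> - S) * real (Q \<theta>) + ubar - 2)) * f \<theta>)"
proof -
  define U where "U = Uf S pg p1 p2 a1 s2"
  define K where "K = Kf a1 s2"
  have ubarU: "ubar = U 1" unfolding ubar_def U_def by (rule payoff_eq)
  have ub: "ubar \<ge> 2" unfolding ubarU U_def by (rule ubar_ge[OF eq])
  have QK: "real (Q \<theta>) = 2 - K \<theta>" for \<theta> unfolding Q_def K_def by (rule Q_eq)
  have ms1: "\<And>h. {\<theta>. a1 \<theta> = h} \<in> sets borel" and ms2: "\<And>h. {\<theta>. s2 \<theta> h} \<in> sets borel"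
    using eq unfolding equilibrium_def by auto
  have BE1: "set_lebesgue_integral lborel {\<theta>\<in>{0..1}. a1 \<theta> = SellMkt} (\<lambda>\<theta>. (\<theta> - p1) * f \<theta>) = 0"
    and BE2: "\<And>h. set_lebesgue_integral lborel {\<theta>\<in>{0..1}. a1 \<theta> = h \<and> s2 \<theta> h} (\<lambda>\<theta>. (\<theta> - p2 h) * f \<theta>) = 0"
    using eq unfolding equilibrium_def by auto
  have fi: "set_integrable lborel {0..1} f" and fpos: "\<And>\<theta>. \<theta> \<in> {0..1} \<Longrightarrow> f \<theta> > 0"
    and Fdef: "\<And>\<theta>. \<theta> \<in> {0..1} \<Longrightarrow> F \<theta> = set_lebesgue_integral lborel {0..\<theta>} f"
    and F1: "F 1 = 1"
    using dist unfolding type_distribution_def by auto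
  define f0 where "f0 = (\<lambda>x. indicator {0..1::real} x * f x)"
  have f0i: "integrable lborel f0" using fi unfolding set_integrable_def f0_def by simp
  have f0z: "\<And>x. x \<notin> {0..1} \<Longrightarrow> f0 x = 0" by (simp add: f0_def)
  have f0m[measurable]: "f0 \<in> borel_measurable borel" using borel_measurable_integrable[OF f0i] by simp
  have A0: "(\<integral>x. f0 x \<partial>lborel) = 1"
    using F1 Fdef[of 1] by (simp add: set_lebesgue_integral_def f0_def)
  have Um[measurable]: "U \<in> borel_measurable borel"
  proof -
    have "(\<lambda>\<theta>. (\<lambda>a b \<theta>. pay1 S pg p1 \<theta> a + pay2 S p2 \<theta> a b) (a1 \<theta>) (s2 \<theta> (a1 \<theta>)) \<theta>) \<in> borel_measurable borel"
    proof (rule meas_strat[OF ms1 ms2])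
      fix a b show "(\<lambda>\<theta>. pay1 S pg p1 \<theta> a + pay2 S p2 \<theta> a b) \<in> borel_measurable borel"
        by (cases "a = NoSale"; cases b) (simp_all add: pay1_def pay2_def)
    qed
    then show ?thesis by (simp add: U_def Uf_def[abs_def])
  qed
  have Km[measurable]: "K \<in> borel_measurable borel"
  proof -
    have "(\<lambda>\<theta>. (\<lambda>a b \<theta>. (if a = NoSale then 1 else 0) + (if b then 0 else 1::real)) (a1 \<theta>) (s2 \<theta> (a1 \<theta>)) \<theta>) \<in> borel_measurable borel"
      by (rule meas_strat[OF ms1 ms2]) simp
    then show ?thesis by (simp add: K_def Kf_def[abs_def])
  qed
  have Qm[measurable]: "(\<lambda>\<theta>. real (Q \<theta>)) \<in> borel_measurable borel"
    unfolding QK using Km by simp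
  have Kb: "\<bar>K \<theta>\<bar> \<le> 2" for \<theta> using Kf_vals[of a1 s2 \<theta>] by (auto simp: K_def)
  have Qb: "\<bar>real (Q \<theta>)\<bar> \<le> 2" for \<theta> using Kf_vals[of a1 s2 \<theta>] by (auto simp: QK K_def)
  define BU where "BU = 2 + \<bar>pg\<bar> + \<bar>p1\<bar> + \<bar>p2 NoSale\<bar> + \<bar>p2 SellGov\<bar> + \<bar>p2 SellMkt\<bar> + 2 * \<bar>S\<bar>"
  have Ub: "\<bar>U \<theta>\<bar> \<le> BU" if "\<theta> \<in> {0..1}" for \<theta>
    using that by (cases "a1 \<theta>"; cases "s2 \<theta> (a1 \<theta>)")
      (auto simp: U_def Uf_def pay1_def pay2_def price1_def BU_def)
  define Fh where "Fh = (\<lambda>s. \<integral>\<theta>. indicator {\<theta>..1} s * f0 \<theta> \<partial>lborel)"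
  have Fh_eq: "Fh s = indicator {0..1} s * F s" for s
  proof (cases "s \<in> {0..1}")
    case True
    have "Fh s = (\<integral>\<theta>. indicator {0..s} \<theta> * f \<theta> \<partial>lborel)"
      unfolding Fh_def f0_def
      by (rule Bochner_Integration.integral_cong) (use True in \<open>auto simp: indicator_def\<close>)
    then show ?thesis using Fdef[OF True] True by (simp add: set_lebesgue_integral_def)
  next
    case False
    have "Fh s = (\<integral>\<theta>. 0 \<partial>(lborel::real measure))"
      unfolding Fh_def
      by (rule Bochner_Integration.integral_cong) (use False f0z in \<open>auto simp: indicator_def\<close>)
    then show ?thesis using False by simp
  qed
  have Fhm[measurable]: "Fh \<in> borel_measurable borel"
  proof -
    have ind: "indicator {\<theta>..1} (s::real) = (if \<theta> \<le> s \<and> s \<le> 1 then 1 else (0::real))" for \<theta> s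
      by (auto simp: indicator_def)
    show ?thesis unfolding Fh_def ind by measurable
  qed
  define C where "C = (\<integral>\<theta>. \<bar>f0 \<theta>\<bar> \<partial>lborel)"
  have Fhb: "\<bar>Fh s\<bar> \<le> C" for s
  proof -
    have "\<bar>Fh s\<bar> \<le> (\<integral>\<theta>. norm (indicator {\<theta>..1} s * f0 \<theta>) \<partial>lborel)"
      unfolding Fh_def using integral_norm_bound by (metis real_norm_def)
    also have "\<dots> \<le> C" unfolding C_def
    proof (rule integral_mono)
      show "integrable lborel (\<lambda>\<theta>. norm (indicator {\<theta>..1} s * f0 \<theta>))"
        by (rule integrable_norm, rule int_bdd[OF f0i]) (auto simp: indicator_def)
      show "integrable lborel (\<lambda>\<theta>. \<bar>f0 \<theta>\<bar>)" using f0i by simp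
    qed (auto simp: indicator_def abs_mult)
    finally show ?thesis .
  qed
  have i_tf0: "integrable lborel (\<lambda>\<theta>. \<theta> * f0 \<theta>)"
  proof (rule int_bdd[OF f0i])
    show "(\<lambda>\<theta>. \<theta>) \<in> borel_measurable borel" by simp
    fix \<theta> assume "f0 \<theta> \<noteq> 0" then have "\<theta> \<in> {0..1}" using f0z by blast
    then show "\<bar>\<theta>\<bar> \<le> 1" by auto
  qed
  have i_Qf0: "integrable lborel (\<lambda>\<theta>. real (Q \<theta>) * f0 \<theta>)"
    by (rule int_bdd[OF f0i Qm Qb])
  have i_Uf0: "integrable lborel (\<lambda>\<theta>. U \<theta> * f0 \<theta>)"
  proof (rule int_bdd[OF f0i Um])
    fix \<theta> assume "f0 \<theta> \<noteq> 0" then have "\<theta> \<in> {0..1}" using f0z by blast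
    then show "\<bar>U \<theta>\<bar> \<le> BU" by (rule Ub)
  qed
  have i_Fh: "integrable lborel Fh"
  proof -
    have "integrable lborel (\<lambda>s. Fh s * indicator {0..1::real} s)"
      by (rule int_bdd[OF _ Fhm Fhb]) (simp add: integrable_indicator_iff emeasure_lborel_Icc)
    moreover have "(\<lambda>s. Fh s * indicator {0..1::real} s) = Fh"
      by (rule ext) (simp add: Fh_eq indicator_def)
    ultimately show ?thesis by simp
  qed
  have i_QFh: "integrable lborel (\<lambda>s. real (Q s) * Fh s)"
    by (rule int_bdd[OF i_Fh Qm Qb])
  define J where "J = (\<lambda>(k::real\<Rightarrow>real) (\<theta>::real). \<integral>s. indicator {\<theta>..1} s * k s \<partial>lborel)"
  have envK: "U 1 - U \<theta> = J K \<theta>" if "\<theta> \<in> {0..1}" for \<theta>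
    unfolding J_def
  proof (rule envelope[OF _ _ Km that])
    fix x y :: real assume "x\<in>{0..1}" "y\<in>{0..1}"
    then show "U x + K x * (y - x) \<le> U y" unfolding U_def K_def by (rule sandwich[OF eq])
  next
    fix x show "K x \<in> {0,1,2}" unfolding K_def by (rule Kf_vals)
  qed
  have env2: "2 * 1 - 2 * \<theta> = J (\<lambda>_. 2) \<theta>" if "\<theta> \<in> {0..1}" for \<theta>
    unfolding J_def
    by (rule envelope[where u="\<lambda>x. 2 * x", OF _ _ _ that]) (auto simp: algebra_simps)
  have fubK: "(\<integral>\<theta>. f0 \<theta> * J K \<theta> \<partial>lborel) = (\<integral>s. K s * Fh s \<partial>lborel)"
    unfolding J_def Fh_def by (rule fub[OF f0i f0z Km Kb])
  have fub2: "(\<integral>\<theta>. f0 \<theta> * J (\<lambda>_. 2) \<theta> \<partial>lborel) = (\<integral>s. 2 * Fh s \<partial>lborel)"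
    unfolding J_def Fh_def by (rule fub[OF f0i f0z, where B=2]) auto
  have e1: "(\<integral>\<theta>. f0 \<theta> * J K \<theta> \<partial>lborel) = U 1 - (\<integral>\<theta>. U \<theta> * f0 \<theta> \<partial>lborel)"
  proof -
    have "(\<integral>\<theta>. f0 \<theta> * J K \<theta> \<partial>lborel) = (\<integral>\<theta>. U 1 * f0 \<theta> - U \<theta> * f0 \<theta> \<partial>lborel)"
    proof (rule Bochner_Integration.integral_cong[OF refl])
      fix \<theta> show "f0 \<theta> * J K \<theta> = U 1 * f0 \<theta> - U \<theta> * f0 \<theta>"
      proof (cases "\<theta> \<in> {0..1}")
        case True then show ?thesis by (simp add: envK[OF True, symmetric] algebra_simps)
      qed (simp add: f0z)
    qed
    also have "\<dots> = U 1 * (\<integral>\<theta>. f0 \<theta> \<partial>lborel) - (\<integral>\<theta>. U \<theta> * f0 \<theta> \<partial>lborel)"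
      using f0i i_Uf0 by simp
    finally show ?thesis using A0 by simp
  qed
  have e2: "(\<integral>\<theta>. f0 \<theta> * J (\<lambda>_. 2) \<theta> \<partial>lborel) = 2 - 2 * (\<integral>\<theta>. \<theta> * f0 \<theta> \<partial>lborel)"
  proof -
    have "(\<integral>\<theta>. f0 \<theta> * J (\<lambda>_. 2) \<theta> \<partial>lborel) = (\<integral>\<theta>. 2 * f0 \<theta> - 2 * (\<theta> * f0 \<theta>) \<partial>lborel)"
    proof (rule Bochner_Integration.integral_cong[OF refl])
      fix \<theta> show "f0 \<theta> * J (\<lambda>_. 2) \<theta> = 2 * f0 \<theta> - 2 * (\<theta> * f0 \<theta>)"
      proof (cases "\<theta> \<in> {0..1}")
        case True then show ?thesis by (simp add: env2[OF True, symmetric] algebra_simps)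
      qed (simp add: f0z)
    qed
    also have "\<dots> = 2 * (\<integral>\<theta>. f0 \<theta> \<partial>lborel) - 2 * (\<integral>\<theta>. \<theta> * f0 \<theta> \<partial>lborel)"
      using f0i i_tf0 by simp
    finally show ?thesis using A0 by simp
  qed
  have e3: "(\<integral>s. K s * Fh s \<partial>lborel) = 2 * (\<integral>s. Fh s \<partial>lborel) - (\<integral>s. real (Q s) * Fh s \<partial>lborel)"
  proof -
    have "(\<integral>s. K s * Fh s \<partial>lborel) = (\<integral>s. 2 * Fh s - real (Q s) * Fh s \<partial>lborel)"
      by (rule Bochner_Integration.integral_cong) (auto simp: QK algebra_simps)
    also have "\<dots> = 2 * (\<integral>s. Fh s \<partial>lborel) - (\<integral>s. real (Q s) * Fh s \<partial>lborel)"
      using i_Fh i_QFh by simp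
    finally show ?thesis .
  qed
  have e4: "(\<integral>s. 2 * Fh s \<partial>lborel) = 2 * (\<integral>s. Fh s \<partial>lborel)" by simp
  define AU where "AU = (\<integral>\<theta>. U \<theta> * f0 \<theta> \<partial>lborel)"
  define At where "At = (\<integral>\<theta>. \<theta> * f0 \<theta> \<partial>lborel)"
  define AQ where "AQ = (\<integral>\<theta>. real (Q \<theta>) * f0 \<theta> \<partial>lborel)"
  define AF where "AF = (\<integral>s. Fh s \<partial>lborel)"
  define AQF where "AQF = (\<integral>s. real (Q s) * Fh s \<partial>lborel)"
  have k1: "U 1 - AU = 2 * AF - AQF" using fubK e1 e3 unfolding AU_def AF_def AQF_def by simp
  have k2: "2 - 2 * At = 2 * AF" using fub2 e2 e4 unfolding At_def AF_def by simp
  have W1: "set_lebesgue_integral lborel {0..1} (\<lambda>\<theta>. (payoff S Q T \<theta> + \<theta> * real (Q \<theta>) - T \<theta>) * f \<theta>)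
      = 2 * At + S * AQ"
  proof -
    have "set_lebesgue_integral lborel {0..1} (\<lambda>\<theta>. (payoff S Q T \<theta> + \<theta> * real (Q \<theta>) - T \<theta>) * f \<theta>)
        = (\<integral>\<theta>. 2 * (\<theta> * f0 \<theta>) + S * (real (Q \<theta>) * f0 \<theta>) \<partial>lborel)"
      unfolding set_lebesgue_integral_def
      by (rule Bochner_Integration.integral_cong[OF refl]) (simp add: payoff_def f0_def algebra_simps)
    also have "\<dots> = 2 * At + S * AQ"
      using i_tf0 i_Qf0 unfolding At_def AQ_def by simp
    finally show ?thesis .
  qed
  define Mk where "Mk = {\<theta>\<in>{0..1::real}. a1 \<theta> = SellMkt}"
  define Bs where "Bs = (\<lambda>h. {\<theta>\<in>{0..1::real}. a1 \<theta> = h \<and> s2 \<theta> h})"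
  have sG: "gov_set a1 \<in> sets borel" "gov_set a1 \<subseteq> {0..1}"
  proof -
    have "gov_set a1 = {0..1} \<inter> {\<theta>. a1 \<theta> = SellGov}" by (auto simp: gov_set_def)
    then show "gov_set a1 \<in> sets borel" using ms1 by simp
  qed (auto simp: gov_set_def)
  have sM: "Mk \<in> sets borel" "Mk \<subseteq> {0..1}"
  proof -
    have "Mk = {0..1} \<inter> {\<theta>. a1 \<theta> = SellMkt}" by (auto simp: Mk_def)
    then show "Mk \<in> sets borel" using ms1 by simp
  qed (auto simp: Mk_def)
  have sB: "Bs h \<in> sets borel" "Bs h \<subseteq> {0..1}" for h
  proof -
    have "Bs h = {0..1} \<inter> {\<theta>. a1 \<theta> = h} \<inter> {\<theta>. s2 \<theta> h}" by (auto simp: Bs_def)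
    then show "Bs h \<in> sets borel" using ms1 ms2 by simp
  qed (auto simp: Bs_def)
  have iA: "integrable lborel (\<lambda>\<theta>. indicator A \<theta> * ((c - \<theta>) * f \<theta>))"
    if A: "A \<in> sets borel" "A \<subseteq> {0..1}" for A c
  proof -
    have "integrable lborel (\<lambda>\<theta>. (indicator A \<theta> * (c - \<theta>)) * f0 \<theta>)"
    proof (rule int_bdd[OF f0i])
      show "(\<lambda>\<theta>. indicator A \<theta> * (c - \<theta>)) \<in> borel_measurable borel"
        using A(1) by (intro borel_measurable_times borel_measurable_indicator) auto
      fix \<theta> assume "f0 \<theta> \<noteq> 0" then have "\<theta> \<in> {0..1}" using f0z by blast
      then show "\<bar>indicator A \<theta> * (c - \<theta>)\<bar> \<le> \<bar>c\<bar> + 1" by (auto simp: indicator_def)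
    qed
    moreover have "(\<lambda>\<theta>. (indicator A \<theta> * (c - \<theta>)) * f0 \<theta>) = (\<lambda>\<theta>. indicator A \<theta> * ((c - \<theta>) * f \<theta>))"
      using A(2) by (auto simp: f0_def indicator_def fun_eq_iff)
    ultimately show ?thesis by simp
  qed
  have neg: "(\<integral>\<theta>. indicator A \<theta> * ((c - \<theta>) * f \<theta>) \<partial>lborel) = - (\<integral>\<theta>. indicator A \<theta> * ((\<theta> - c) * f \<theta>) \<partial>lborel)"
    for A c
  proof -
    have "(\<integral>\<theta>. indicator A \<theta> * ((c - \<theta>) * f \<theta>) \<partial>lborel) = (\<integral>\<theta>. - (indicator A \<theta> * ((\<theta> - c) * f \<theta>)) \<partial>lborel)"
      by (rule Bochner_Integration.integral_cong[OF refl]) (simp add: algebra_simps)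
    then show ?thesis by simp
  qed
  have z1: "(\<integral>\<theta>. indicator Mk \<theta> * ((p1 - \<theta>) * f \<theta>) \<partial>lborel) = 0"
    using BE1 unfolding neg set_lebesgue_integral_def Mk_def by simp
  have z2: "(\<integral>\<theta>. indicator (Bs h) \<theta> * ((p2 h - \<theta>) * f \<theta>) \<partial>lborel) = 0" for h
    using BE2[of h] unfolding neg set_lebesgue_integral_def Bs_def by simp
  have pw: "U \<theta> * f0 \<theta> - 2 * (\<theta> * f0 \<theta>) - S * (real (Q \<theta>) * f0 \<theta>)
      = indicator (gov_set a1) \<theta> * ((pg - \<theta>) * f \<theta>) + indicator Mk \<theta> * ((p1 - \<theta>) * f \<theta>)
        + indicator (Bs NoSale) \<theta> * ((p2 NoSale - \<theta>) * f \<theta>)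
        + indicator (Bs SellGov) \<theta> * ((p2 SellGov - \<theta>) * f \<theta>)
        + indicator (Bs SellMkt) \<theta> * ((p2 SellMkt - \<theta>) * f \<theta>)" for \<theta>
  proof (cases "\<theta> \<in> {0..1}")
    case True
    then show ?thesis
      by (cases "a1 \<theta>"; cases "s2 \<theta> (a1 \<theta>)")
        (auto simp: U_def Uf_def pay1_def pay2_def price1_def Q_def outcome_Q_def f0_def
          indicator_def gov_set_def Mk_def Bs_def algebra_simps)
  next
    case False
    then show ?thesis by (auto simp: f0z indicator_def gov_set_def Mk_def Bs_def)
  qed
  have G: "set_lebesgue_integral lborel (gov_set a1) (\<lambda>\<theta>. (pg - \<theta>) * f \<theta>) = AU - 2 * At - S * AQ"
  proof -
    have "AU - 2 * At - S * AQ = (\<integral>\<theta>. U \<theta> * f0 \<theta> - 2 * (\<theta> * f0 \<theta>) - S * (real (Q \<theta>) * f0 \<theta>) \<partial>lborel)"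
      using i_Uf0 i_tf0 i_Qf0 unfolding AU_def At_def AQ_def by simp
    also have "\<dots> = (\<integral>\<theta>. indicator (gov_set a1) \<theta> * ((pg - \<theta>) * f \<theta>) + indicator Mk \<theta> * ((p1 - \<theta>) * f \<theta>)
        + indicator (Bs NoSale) \<theta> * ((p2 NoSale - \<theta>) * f \<theta>)
        + indicator (Bs SellGov) \<theta> * ((p2 SellGov - \<theta>) * f \<theta>)
        + indicator (Bs SellMkt) \<theta> * ((p2 SellMkt - \<theta>) * f \<theta>) \<partial>lborel)"
      unfolding pw ..
    also have "\<dots> = (\<integral>\<theta>. indicator (gov_set a1) \<theta> * ((pg - \<theta>) * f \<theta>) \<partial>lborel)"
      using iA[OF sG] iA[OF sM] iA[OF sB] z1 z2 by simp
    finally show ?thesis unfolding set_lebesgue_integral_def by simp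
  qed
  have R: "set_lebesgue_integral lborel {0..1}
             (\<lambda>\<theta>. (2 * \<theta> + S * real (Q \<theta>)
                    - lam * ((F \<theta> / f \<theta> - S) * real (Q \<theta>) + ubar - 2)) * f \<theta>)
        = 2 * At + S * AQ - lam * (AQF - S * AQ + (ubar - 2))"
  proof -
    have "set_lebesgue_integral lborel {0..1}
             (\<lambda>\<theta>. (2 * \<theta> + S * real (Q \<theta>)
                    - lam * ((F \<theta> / f \<theta> - S) * real (Q \<theta>) + ubar - 2)) * f \<theta>)
        = (\<integral>\<theta>. 2 * (\<theta> * f0 \<theta>) + S * (real (Q \<theta>) * f0 \<theta>)
              - lam * (real (Q \<theta>) * Fh \<theta> - S * (real (Q \<theta>) * f0 \<theta>) + (ubar - 2) * f0 \<theta>) \<partial>lborel)"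
      unfolding set_lebesgue_integral_def
    proof (rule Bochner_Integration.integral_cong[OF refl])
      fix \<theta> :: real
      show "indicator {0..1} \<theta> *\<^sub>R ((2 * \<theta> + S * real (Q \<theta>)
                    - lam * ((F \<theta> / f \<theta> - S) * real (Q \<theta>) + ubar - 2)) * f \<theta>) =
          2 * (\<theta> * f0 \<theta>) + S * (real (Q \<theta>) * f0 \<theta>)
              - lam * (real (Q \<theta>) * Fh \<theta> - S * (real (Q \<theta>) * f0 \<theta>) + (ubar - 2) * f0 \<theta>)"
      proof (cases "\<theta> \<in> {0..1}")
        case True
        have fn: "f \<theta> \<noteq> 0" using fpos[OF True] by simp
        have "(F \<theta> / f \<theta> - S) * real (Q \<theta>) * f \<theta> = real (Q \<theta>) * F \<theta> - S * (real (Q \<theta>) * f \<theta>)"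
          using fn by (simp add: field_simps)
        then show ?thesis using True fn by (simp add: f0_def Fh_eq algebra_simps)
      next
        case False
        then show ?thesis by (simp add: f0_def Fh_eq)
      qed
    qed
    also have "\<dots> = 2 * At + S * AQ - lam * (AQF - S * AQ + (ubar - 2))"
      using i_tf0 i_Qf0 i_QFh f0i A0 unfolding At_def AQ_def AQF_def by simp
    finally show ?thesis .
  qed
  have GG: "AU - 2 * At - S * AQ = AQF - S * AQ + (ubar - 2)"
    using k1 k2 ubarU by linarith
  show ?thesis
    using ub W1 G R GG unfolding welfare_def by simp
qed

end
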